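(* For every matrix $A=[a_{ij}]_{i,j=1}^2\in\mathbb{C}^{2\times 2}$, writing $s=\operatorname{tr}A$ and $p=\det A$: (i) $\mu_E(A)<1$ if and only if $(s,p)\in\mathbb{G}$ and $\displaystyle |a_{21}|\sup_{z\in\mathbb{D}}\frac{1-|z|^2}{|1-sz+pz^2|}<1$; (ii) $\mu_E(A)\le 1$ if and only if $(s,p)\in\Gamma$ and $\displaystyle \frac{|a_{21}|(1-|z|^2)}{|1-sz+pz^2|}\le 1$ for all $z\in\mathbb{D}$.
   Context: $\mathbb{D}$ is the open unit disc in $\mathbb{C}$. The symmetrised bidisc is $\mathbb{G}=\{(z+w,zw): |z|<1,|w|<1\}\subset\mathbb{C}^2$ and $\Gamma=\{(z+w,zw):|z|\le1,|w|\le1\}$ is its closure. Let $E=\operatorname{span}\{I, \begin{pmatrix}0&1\\0&0\end{pmatrix}\}\subset\mathbb{C}^{2\times2}$, i.e. $E$ consists of the matrices $\begin{pmatrix}z&w\\0&z\end{pmatrix}$, $z,w\in\mathbb{C}$. For $A\in\mathbb{C}^{2\times2}$ the structured singular value $\mu_E(A)$ is defined by $1/\mu_E(A)=\inf\{\|X\|: X\in E,\ \det(I-AX)=0\}$ (operator norm; with $\mu_E(A)=0$ if no such $X$ exists). *)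

theory Defs
  imports "HOL-Analysis.Analysis"
begin

definition unit_disc :: "complex set" where
  "unit_disc = {z. cmod z < 1}"

definition symm_bidisc :: "(complex \<times> complex) set" where
  "symm_bidisc = {(z + w, z * w) | z w. cmod z < 1 \<and> cmod w < 1}"

definition symm_bidisc_closed :: "(complex \<times> complex) set" where
  "symm_bidisc_closed = {(z + w, z * w) | z w. cmod z \<le> 1 \<and> cmod w \<le> 1}"

text \<open>The space E of 2x2 matrices of the form [[z,w],[0,z]].
  Indices of the type 2: 1 is the first index, 2 the second.\<close>
definition spaceE :: "(complex^2^2) set" where
  "spaceE = {(\<chi> i j. if i = j then z else if i = 1 \<and> j = 2 then w else 0) | z w. True}"

definition mat_opnorm :: "complex^2^2 \<Rightarrow> real" where
  "mat_opnorm X = onorm (\<lambda>v. X *v v)"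

definition muE :: "complex^2^2 \<Rightarrow> real" where
  "muE A = (let S = {mat_opnorm X | X. X \<in> spaceE \<and> det (mat 1 - A ** X) = 0}
            in if S = {} then 0 else 1 / Inf S)"

end

theory Submission
  imports Defs
begin


definition Em :: "complex \<Rightarrow> complex \<Rightarrow> complex^2^2" where
  "Em z w = (\<chi> i j. if i = j then z else if i = 1 \<and> j = 2 then w else 0)"

lemma spaceE_eq: "spaceE = {Em z w | z w. True}"
  unfolding spaceE_def Em_def by auto

lemma det_Em: "det (mat 1 - A ** Em z w) = 1 - trace A * z + det A * z^2 - A$2$1 * w"
  unfolding det_2 trace_def sum_2 Em_def
  by (simp add: matrix_matrix_mult_def sum_2 mat_def algebra_simps power2_eq_square)

lemma norm_vec2: "norm (v::complex^2) = sqrt ((cmod (v$1))^2 + (cmod (v$2))^2)"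
  unfolding norm_vec_def L2_set_def sum_2 by simp

lemma Em_mult: "(Em z w *v v) $ 1 = z * v$1 + w * v$2" "(Em z w *v v) $ 2 = z * v$2"
  unfolding Em_def by (simp_all add: matrix_vector_mult_def sum_2)



definition rr :: "real \<Rightarrow> real \<Rightarrow> real" where
  "rr a b = (b + sqrt (b^2 + 4*a^2))/2"

lemma rr_sq: "(rr a b)^2 = b * rr a b + a^2"
proof -
  have "(sqrt (b^2 + 4*a^2))^2 = b^2 + 4*a^2" by simp
  then show ?thesis unfolding rr_def by (simp add: power2_eq_square field_simps)
qed

lemma rr_ge: assumes "a \<ge> 0" "b \<ge> 0" shows "rr a b \<ge> a" "rr a b \<ge> b" "rr a b \<ge> 0"
proof -
  have "sqrt (b^2 + 4*a^2) \<ge> sqrt (b^2)" by (intro real_sqrt_le_mono) simp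
  then have s1: "sqrt (b^2 + 4*a^2) \<ge> b" using assms by simp
  have "2*a = sqrt ((2*a)^2)" using assms by (simp only: real_sqrt_abs)
  also have "\<dots> \<le> sqrt (b^2 + 4*a^2)" by (intro real_sqrt_le_mono) (simp add: power_mult_distrib)
  finally have s2: "sqrt (b^2 + 4*a^2) \<ge> 2*a" .
  show "rr a b \<ge> a" "rr a b \<ge> b" "rr a b \<ge> 0" unfolding rr_def using s1 s2 assms by auto
qed

lemma rr_one: assumes "a \<ge> 0" "b \<ge> 0"
  shows "(1 \<le> rr a b \<longleftrightarrow> 1 \<le> b + a^2)" "(1 < rr a b \<longleftrightarrow> 1 < b + a^2)"
proof -
  define r2 where "r2 = (b - sqrt (b^2 + 4*a^2))/2"
  have "sqrt (b^2 + 4*a^2) \<ge> sqrt (b^2)" by (intro real_sqrt_le_mono) simp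
  then have "r2 \<le> 0" using assms unfolding r2_def by simp
  have sq: "(sqrt (b^2 + 4*a^2))^2 = b^2 + 4*a^2" by simp
  have id: "1 - b - a^2 = (1 - rr a b) * (1 - r2)"
    unfolding rr_def r2_def using sq by (simp add: algebra_simps power2_eq_square field_simps)
  have "1 - r2 > 0" using \<open>r2 \<le> 0\<close> by simp
  show "(1 \<le> rr a b \<longleftrightarrow> 1 \<le> b + a^2)"
  proof
    assume "1 \<le> rr a b" then have "(1 - rr a b) * (1 - r2) \<le> 0"
      using \<open>1 - r2 > 0\<close> by (simp add: mult_nonpos_nonneg)
    then show "1 \<le> b + a^2" using id by simp
  next
    assume "1 \<le> b + a^2" then have "(1 - rr a b) * (1 - r2) \<le> 0" using id by simp
    then show "1 \<le> rr a b" using \<open>1 - r2 > 0\<close> by (simp add: mult_le_0_iff)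
  qed
  show "(1 < rr a b \<longleftrightarrow> 1 < b + a^2)"
  proof
    assume "1 < rr a b" then have "(1 - rr a b) * (1 - r2) < 0"
      using \<open>1 - r2 > 0\<close> by (simp add: mult_neg_pos)
    then show "1 < b + a^2" using id by simp
  next
    assume "1 < b + a^2" then have "(1 - rr a b) * (1 - r2) < 0" using id by simp
    then show "1 < rr a b" using \<open>1 - r2 > 0\<close> by (simp add: mult_less_0_iff)
  qed
qed

lemma key_ineq:
  fixes a b x y r :: real
  assumes "a \<ge> 0" "b \<ge> 0" "x \<ge> 0" "y \<ge> 0" "r\<^sup>2 = b * r + a\<^sup>2" "r \<ge> a" "r \<ge> b" "r \<ge> 0"
  shows "(a*x+b*y)^2 + a^2*y^2 \<le> r^2*(x^2+y^2)"
proof (cases "r = 0")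
  case True then have "a = 0" "b = 0" using assms by auto
  then show ?thesis using True by simp
next
  case False
  define D where "D = r^2*(x^2+y^2) - ((a*x+b*y)^2 + a^2*y^2)"
  have "r*D - b*(r*x - a*y)^2 = (r*x^2 + (r+b)*y^2) * (r^2 - b*r - a^2)"
    unfolding D_def by algebra
  then have "r * D = b * (r*x - a*y)^2" using assms(5) by simp
  then have "r * D \<ge> 0" using assms by simp
  then have "D \<ge> 0" using False assms by (simp add: zero_le_mult_iff)
  then show ?thesis unfolding D_def by simp
qed



lemma Em_upper: "norm (Em z w *v v) \<le> rr (cmod z) (cmod w) * norm v"
proof -
  let ?a = "cmod z" and ?b = "cmod w" and ?x = "cmod (v$1)" and ?y = "cmod (v$2)"
  let ?r = "rr ?a ?b"
  have r: "?r\<^sup>2 = ?b * ?r + ?a\<^sup>2" "?r \<ge> ?a" "?r \<ge> ?b" "?r \<ge> 0"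
    using rr_sq rr_ge[of ?a ?b] by auto
  have "cmod (z * v$1 + w * v$2) \<le> ?a * ?x + ?b * ?y"
    by (metis norm_mult norm_triangle_ineq)
  then have "(cmod (z * v$1 + w * v$2))^2 \<le> (?a * ?x + ?b * ?y)^2"
    by (simp add: power_mono)
  also have "\<dots> \<le> ?r^2*(?x^2+?y^2) - ?a^2*?y^2"
    using key_ineq[OF _ _ _ _ r, of ?x ?y] by simp
  finally have "(cmod (z * v$1 + w * v$2))^2 + (cmod (z * v$2))^2 \<le> ?r^2*(?x^2+?y^2)"
    by (simp add: norm_mult power_mult_distrib)
  then have "sqrt ((cmod (z * v$1 + w * v$2))^2 + (cmod (z * v$2))^2) \<le> sqrt (?r^2*(?x^2+?y^2))"
    by (rule real_sqrt_le_mono)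
  also have "\<dots> = ?r * sqrt (?x^2+?y^2)" using r(4) by (simp add: real_sqrt_mult)
  finally show ?thesis unfolding norm_vec2[of v] norm_vec2[of "Em z w *v v"] Em_mult .
qed

lemma Em_opnorm: "mat_opnorm (Em z w) = rr (cmod z) (cmod w)"
proof (rule antisym)
  show "mat_opnorm (Em z w) \<le> rr (cmod z) (cmod w)"
    unfolding mat_opnorm_def by (rule onorm_le) (rule Em_upper)
next
  let ?a = "cmod z" and ?b = "cmod w"
  let ?r = "rr ?a ?b"
  have r: "?r\<^sup>2 = ?b * ?r + ?a\<^sup>2" "?r \<ge> ?a" "?r \<ge> ?b" "?r \<ge> 0"
    using rr_sq rr_ge[of ?a ?b] by auto
  have bl: "bounded_linear ((*v) (Em z w))" by simp
  obtain v :: "complex^2" where v0: "v \<noteq> 0" and vn: "norm (Em z w *v v) = ?r * norm v"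
  proof (cases "w = 0")
    case True
    then have "?r = ?a" unfolding rr_def by (simp add: real_sqrt_mult)
    let ?v = "vector [0, 1] :: complex^2"
    have "?v \<noteq> 0" by (metis vector_2(2) zero_index zero_neq_one)
    moreover have "norm (Em z w *v ?v) = ?r * norm ?v"
      unfolding norm_vec2 Em_mult using True \<open>?r = ?a\<close> by simp
    ultimately show ?thesis using that by blast
  next
    case False
    let ?v = "vector [cnj z * (w / of_real ?b), of_real ?r] :: complex^2"
    have "?r > 0" using r False by (smt (verit) zero_less_norm_iff)
    then have "?v \<noteq> 0" by (metis vector_2(2) zero_index of_real_eq_0_iff less_irrefl)
    have c1: "z * (cnj z * (w / of_real ?b)) + w * of_real ?r = (w / of_real ?b) * of_real (?r^2)"
    proof -
      have "z * cnj z = of_real (?a^2)" using complex_norm_square by (simp add: mult.commute)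
      moreover have "w = (w / of_real ?b) * of_real ?b" using False by simp
      ultimately have "z * (cnj z * (w / of_real ?b)) + w * of_real ?r = (w / of_real ?b) * (of_real (?a^2) + of_real ?b * of_real ?r)"
        by (metis (no_types, lifting) distrib_left mult.assoc mult.commute)
      then show ?thesis using r(1) by (simp add: algebra_simps)
    qed
    have nw: "cmod (w / of_real ?b) = 1" using False by (simp add: norm_divide)
    have "norm (Em z w *v ?v) = sqrt ((?r^2)^2 + (?a * ?r)^2)"
    proof -
      have e1: "cmod ((w / of_real ?b) * of_real (?r^2)) = ?r^2"
        using nw by (simp only: norm_mult norm_of_real) simp
      have e2: "cmod (z * of_real ?r) = ?a * ?r" using r(4) by (simp add: norm_mult)
      show ?thesis unfolding norm_vec2 Em_mult vector_2 c1 e1 e2 ..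
    qed
    also have "\<dots> = sqrt (?r^2 * (?a^2 + ?r^2))" by (simp add: algebra_simps power2_eq_square)
    also have "\<dots> = ?r * norm ?v"
    proof -
      have e3: "cmod (cnj z * (w / of_real ?b)) = ?a" using nw by (simp only: norm_mult complex_mod_cnj)
      show ?thesis unfolding norm_vec2 vector_2 e3 using r(4)
        by (simp add: real_sqrt_mult)
    qed
    finally show ?thesis using that \<open>?v \<noteq> 0\<close> by blast
  qed
  have "norm (Em z w *v v) \<le> onorm ((*v) (Em z w)) * norm v" by (rule onorm[OF bl])
  then have "?r * norm v \<le> onorm ((*v) (Em z w)) * norm v" using vn by simp
  then show "?r \<le> mat_opnorm (Em z w)" unfolding mat_opnorm_def using v0 by simp
qed



lemma attain:
  fixes c s p :: complex
  assumes "c * w1 = 1 - s * z1 + p * z1^2"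
  shows "\<exists>z0 w0. c * w0 = 1 - s * z0 + p * z0^2 \<and>
           (\<forall>z w. c * w = 1 - s * z + p * z^2 \<longrightarrow> rr (cmod z0) (cmod w0) \<le> rr (cmod z) (cmod w))"
proof -
  define Z where "Z = {x::complex\<times>complex. c * snd x = 1 - s * fst x + p * (fst x)^2}"
  define f where "f = (\<lambda>x::complex\<times>complex. rr (cmod (fst x)) (cmod (snd x)))"
  define R where "R = f (z1, w1)"
  have fge: "norm x \<le> 2 * f x" for x
  proof -
    have "norm x = sqrt ((cmod (fst x))^2 + (cmod (snd x))^2)"
      by (metis norm_Pair prod.collapse)
    also have "\<dots> \<le> cmod (fst x) + cmod (snd x)" by (intro sqrt_sum_squares_le_sum) auto
    also have "\<dots> \<le> 2 * f x" unfolding f_def using rr_ge[of "cmod (fst x)" "cmod (snd x)"] by simp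
    finally show ?thesis .
  qed
  have cZ: "closed Z" unfolding Z_def
    by (intro closed_Collect_eq continuous_intros)
  define K where "K = Z \<inter> cball 0 (2*R)"
  have "compact K" unfolding K_def using cZ by (intro closed_Int_compact compact_cball)
  moreover have "(z1, w1) \<in> K" unfolding K_def Z_def R_def using assms fge[of "(z1,w1)"] by simp
  moreover have "continuous_on K f" unfolding f_def rr_def by (intro continuous_intros) auto
  ultimately obtain x0 where x0: "x0 \<in> K" "\<forall>y\<in>K. f x0 \<le> f y"
    using continuous_attains_inf[of K f] by blast
  have "\<forall>y\<in>Z. f x0 \<le> f y"
  proof
    fix y assume "y \<in> Z"
    show "f x0 \<le> f y"
    proof (cases "y \<in> K")
      case True then show ?thesis using x0 by blast
    next
      case False
      then have "norm y > 2 * R" using \<open>y \<in> Z\<close> unfolding K_def by auto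
      then have "f y > R" using fge[of y] by simp
      moreover have "f x0 \<le> R" using x0 \<open>(z1, w1) \<in> K\<close> unfolding R_def by blast
      ultimately show ?thesis by simp
    qed
  qed
  then show ?thesis using x0(1) unfolding K_def Z_def f_def
    by (intro exI[of _ "fst x0"] exI[of _ "snd x0"]) auto
qed

lemma S_eq: "{mat_opnorm X | X. X \<in> spaceE \<and> det (mat 1 - A ** X) = 0} =
   {rr (cmod z) (cmod w) | z w. A$2$1 * w = 1 - trace A * z + det A * z^2}"
proof -
  have d: "det (mat 1 - A ** Em z w) = 0 \<longleftrightarrow> A$2$1 * w = 1 - trace A * z + det A * z^2" for z w
    unfolding det_Em by (auto simp: algebra_simps)
  show ?thesis unfolding spaceE_eq
    apply (rule set_eqI)
    apply (simp only: mem_Collect_eq)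
    using d Em_opnorm by metis
qed

lemma muE_char:
  "(muE A < 1 \<longleftrightarrow> (\<forall>z w. A$2$1 * w = 1 - trace A * z + det A * z^2 \<longrightarrow> 1 < cmod w + (cmod z)^2))
   \<and> (muE A \<le> 1 \<longleftrightarrow> (\<forall>z w. A$2$1 * w = 1 - trace A * z + det A * z^2 \<longrightarrow> 1 \<le> cmod w + (cmod z)^2))"
proof -
  define S where "S = {mat_opnorm X | X. X \<in> spaceE \<and> det (mat 1 - A ** X) = 0}"
  let ?P = "\<lambda>z w. A$2$1 * w = 1 - trace A * z + det A * z^2"
  have S: "S = {rr (cmod z) (cmod w) | z w. ?P z w}" unfolding S_def by (rule S_eq)
  have mu: "muE A = (if S = {} then 0 else 1 / Inf S)" unfolding muE_def S_def Let_def by simp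
  show ?thesis
  proof (cases "S = {}")
    case True
    then have "\<forall>z w. \<not> ?P z w" using S by auto
    then show ?thesis using mu True by simp
  next
    case False
    then obtain z1 w1 where "?P z1 w1" using S by auto
    from attain[OF this] obtain z0 w0 where m: "?P z0 w0"
      "\<forall>z w. ?P z w \<longrightarrow> rr (cmod z0) (cmod w0) \<le> rr (cmod z) (cmod w)" by blast
    let ?m = "rr (cmod z0) (cmod w0)"
    have "Inf S = ?m" unfolding S using m by (intro cInf_eq_minimum) auto
    have "?m > 0"
    proof (rule ccontr)
      assume "\<not> ?m > 0"
      then have "?m = 0" using rr_ge[of "cmod z0" "cmod w0"] by simp
      then have "z0 = 0" "w0 = 0" using rr_ge[of "cmod z0" "cmod w0"] by auto
      then show False using m(1) by simp
    qed
    have mu': "muE A = 1 / ?m" using mu False \<open>Inf S = ?m\<close> by simp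
    have A1: "muE A < 1 \<longleftrightarrow> 1 < ?m" unfolding mu' using \<open>?m > 0\<close> by (simp add: divide_less_eq)
    have A2: "muE A \<le> 1 \<longleftrightarrow> 1 \<le> ?m" unfolding mu' using \<open>?m > 0\<close> by (simp add: divide_le_eq)
    have B1: "1 < ?m \<longleftrightarrow> (\<forall>z w. ?P z w \<longrightarrow> 1 < rr (cmod z) (cmod w))"
      using m less_le_trans by blast
    have B2: "1 \<le> ?m \<longleftrightarrow> (\<forall>z w. ?P z w \<longrightarrow> 1 \<le> rr (cmod z) (cmod w))"
      using m order_trans by blast
    show ?thesis unfolding A1 A2 B1 B2 using rr_one by simp
  qed
qed



lemma roots2: "\<exists>\<alpha> \<beta>::complex. \<alpha> + \<beta> = s \<and> \<alpha> * \<beta> = p"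
proof -
  define d where "d = csqrt (s^2 - 4*p)"
  have "d^2 = s^2 - 4*p" unfolding d_def by simp
  then have "((s + d)/2) * ((s - d)/2) = p" by (simp add: field_simps power2_eq_square)
  moreover have "(s + d)/2 + (s - d)/2 = s" by (simp add: field_simps)
  ultimately show ?thesis by blast
qed

lemma factor: fixes \<alpha> \<beta> s p z :: complex
  assumes "\<alpha> + \<beta> = s" "\<alpha> * \<beta> = p" shows "1 - s*z + p*z^2 = (1 - \<alpha>*z) * (1 - \<beta>*z)"
  unfolding assms[symmetric] by algebra

lemma factor_ne: "cmod \<alpha> * cmod z < 1 \<Longrightarrow> 1 - \<alpha> * z \<noteq> 0"
  by (metis norm_mult norm_one right_minus_eq less_irrefl)

lemma root_zero: "\<alpha> \<noteq> 0 \<Longrightarrow> 1 - \<alpha> * (1/\<alpha>) = (0::complex)" by simp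

lemma G_iff: "(s,p) \<in> symm_bidisc \<longleftrightarrow> (\<forall>z. cmod z \<le> 1 \<longrightarrow> 1 - s*z + p*z^2 \<noteq> 0)"
proof
  assume "(s,p) \<in> symm_bidisc"
  then obtain a b where ab: "s = a + b" "p = a * b" "cmod a < 1" "cmod b < 1"
    unfolding symm_bidisc_def by auto
  show "\<forall>z. cmod z \<le> 1 \<longrightarrow> 1 - s*z + p*z^2 \<noteq> 0"
  proof (intro allI impI)
    fix z :: complex assume z: "cmod z \<le> 1"
    have "cmod a * cmod z < 1" using ab z
      by (metis mult_le_one norm_ge_zero less_le mult_less_cancel_right1 le_less_trans mult.commute mult_right_le_one_le)
    moreover have "cmod b * cmod z < 1" using ab z
      by (metis mult_le_one norm_ge_zero less_le mult_less_cancel_right1 le_less_trans mult.commute mult_right_le_one_le)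
    ultimately show "1 - s*z + p*z^2 \<noteq> 0" using factor[of a b s p z] ab factor_ne by auto
  qed
next
  assume H: "\<forall>z. cmod z \<le> 1 \<longrightarrow> 1 - s*z + p*z^2 \<noteq> 0"
  obtain a b where ab: "a + b = s" "a * b = p" using roots2 by blast
  have "cmod a < 1"
  proof (rule ccontr)
    assume "\<not> cmod a < 1"
    then have "a \<noteq> 0" "cmod (1/a) \<le> 1" by (auto simp: norm_divide divide_le_eq)
    then show False using H factor[OF ab, of "1/a"] by auto
  qed
  moreover have "cmod b < 1"
  proof (rule ccontr)
    assume "\<not> cmod b < 1"
    then have "b \<noteq> 0" "cmod (1/b) \<le> 1" by (auto simp: norm_divide divide_le_eq)
    then show False using H factor[OF ab, of "1/b"] by auto
  qed
  ultimately show "(s,p) \<in> symm_bidisc" unfolding symm_bidisc_def using ab by auto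
qed

lemma Gam_iff: "(s,p) \<in> symm_bidisc_closed \<longleftrightarrow> (\<forall>z. cmod z < 1 \<longrightarrow> 1 - s*z + p*z^2 \<noteq> 0)"
proof
  assume "(s,p) \<in> symm_bidisc_closed"
  then obtain a b where ab: "s = a + b" "p = a * b" "cmod a \<le> 1" "cmod b \<le> 1"
    unfolding symm_bidisc_closed_def by auto
  show "\<forall>z. cmod z < 1 \<longrightarrow> 1 - s*z + p*z^2 \<noteq> 0"
  proof (intro allI impI)
    fix z :: complex assume z: "cmod z < 1"
    have "cmod a * cmod z < 1" using ab z
      by (metis le_less_trans mult_left_le_one_le norm_ge_zero)
    moreover have "cmod b * cmod z < 1" using ab z
      by (metis le_less_trans mult_left_le_one_le norm_ge_zero)
    ultimately show "1 - s*z + p*z^2 \<noteq> 0" using factor[of a b s p z] ab factor_ne by auto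
  qed
next
  assume H: "\<forall>z. cmod z < 1 \<longrightarrow> 1 - s*z + p*z^2 \<noteq> 0"
  obtain a b where ab: "a + b = s" "a * b = p" using roots2 by blast
  have "cmod a \<le> 1"
  proof (rule ccontr)
    assume "\<not> cmod a \<le> 1"
    then have "a \<noteq> 0" "cmod (1/a) < 1" by (auto simp: norm_divide divide_less_eq)
    then show False using H factor[OF ab, of "1/a"] by auto
  qed
  moreover have "cmod b \<le> 1"
  proof (rule ccontr)
    assume "\<not> cmod b \<le> 1"
    then have "b \<noteq> 0" "cmod (1/b) < 1" by (auto simp: norm_divide divide_less_eq)
    then show False using H factor[OF ab, of "1/b"] by auto
  qed
  ultimately show "(s,p) \<in> symm_bidisc_closed" unfolding symm_bidisc_closed_def using ab by auto
qed


lemma g_max: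
  fixes s p :: complex
  assumes "\<forall>z. cmod z \<le> 1 \<longrightarrow> 1 - s*z + p*z^2 \<noteq> 0"
  shows "\<exists>z0. cmod z0 \<le> 1 \<and> (\<forall>z. cmod z \<le> 1 \<longrightarrow>
     (1 - (cmod z)^2) / cmod (1 - s*z + p*z^2) \<le> (1 - (cmod z0)^2) / cmod (1 - s*z0 + p*z0^2))"
proof -
  have "continuous_on (cball 0 1) (\<lambda>z. (1 - (cmod z)^2) / cmod (1 - s*z + p*z^2))"
    using assms by (intro continuous_intros) auto
  moreover have "compact (cball (0::complex) 1)" "cball (0::complex) 1 \<noteq> {}" by auto
  ultimately obtain z0 where "z0 \<in> cball 0 1" "\<forall>z\<in>cball 0 1. (1 - (cmod z)^2) / cmod (1 - s*z + p*z^2) \<le> (1 - (cmod z0)^2) / cmod (1 - s*z0 + p*z0^2)"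
    using continuous_attains_sup[of "cball (0::complex) 1" "(\<lambda>z. (1 - (cmod z)^2) / cmod (1 - s*z + p*z^2))"] by blast
  then show ?thesis by auto
qed

lemma core:
  fixes a s p :: complex
  shows "((\<forall>z w. a*w = 1 - s*z + p*z^2 \<longrightarrow> 1 < cmod w + (cmod z)^2) \<longleftrightarrow>
           (s,p) \<in> symm_bidisc \<and> cmod a * (SUP z\<in>unit_disc. (1 - (cmod z)^2) / cmod (1 - s*z + p*z^2)) < 1)
   \<and> ((\<forall>z w. a*w = 1 - s*z + p*z^2 \<longrightarrow> 1 \<le> cmod w + (cmod z)^2) \<longleftrightarrow>
           (s,p) \<in> symm_bidisc_closed \<and> (\<forall>z\<in>unit_disc. cmod a * (1 - (cmod z)^2) / cmod (1 - s*z + p*z^2) \<le> 1))"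
proof (intro conjI)
  let ?Q = "\<lambda>z. 1 - s*z + p*z^2"
  let ?g = "\<lambda>z. (1 - (cmod z)^2) / cmod (?Q z)"
  have D: "unit_disc \<noteq> {}" unfolding unit_disc_def by (metis (mono_tags) mem_Collect_eq norm_zero zero_less_one empty_iff)
  show "(\<forall>z w. a*w = ?Q z \<longrightarrow> 1 < cmod w + (cmod z)^2) \<longleftrightarrow>
           (s,p) \<in> symm_bidisc \<and> cmod a * (SUP z\<in>unit_disc. ?g z) < 1"
  proof
    assume H: "\<forall>z w. a*w = ?Q z \<longrightarrow> 1 < cmod w + (cmod z)^2"
    have nz: "\<forall>z. cmod z \<le> 1 \<longrightarrow> ?Q z \<noteq> 0"
    proof (intro allI impI)
      fix z :: complex assume "cmod z \<le> 1"
      moreover have "(cmod z)^2 \<le> 1" using calculation by (simp add: power_le_one)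
      ultimately show "?Q z \<noteq> 0" using H[rule_format, of 0 z] by auto
    qed
    then have G: "(s,p) \<in> symm_bidisc" using G_iff by blast
    have pw: "cmod a * ?g z < 1" if "cmod z < 1" for z
    proof (cases "a = 0")
      case True then show ?thesis by simp
    next
      case False
      have Qn: "?Q z \<noteq> 0" using nz that by simp
      have "1 < cmod (?Q z / a) + (cmod z)^2" using H[rule_format, of "?Q z / a" z] False by simp
      then have "cmod a * (1 - (cmod z)^2) < cmod (?Q z)" using False
        by (simp add: norm_divide field_simps)
      then show ?thesis using Qn by (simp add: field_simps)
    qed
    obtain z0 where z0: "cmod z0 \<le> 1" "\<forall>z. cmod z \<le> 1 \<longrightarrow> ?g z \<le> ?g z0"
      using g_max[OF nz] by blast
    have "cmod a * ?g z0 < 1"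
    proof (cases "cmod z0 < 1")
      case True then show ?thesis using pw by blast
    next
      case False then have "cmod z0 = 1" using z0 by simp
      then show ?thesis by simp
    qed
    moreover have "(SUP z\<in>unit_disc. ?g z) \<le> ?g z0"
      using D z0 by (intro cSUP_least) (auto simp: unit_disc_def)
    ultimately have "cmod a * (SUP z\<in>unit_disc. ?g z) < 1"
      by (meson le_less_trans mult_left_mono norm_ge_zero)
    then show "(s,p) \<in> symm_bidisc \<and> cmod a * (SUP z\<in>unit_disc. ?g z) < 1" using G by simp
  next
    assume "(s,p) \<in> symm_bidisc \<and> cmod a * (SUP z\<in>unit_disc. ?g z) < 1"
    then have nz: "\<forall>z. cmod z \<le> 1 \<longrightarrow> ?Q z \<noteq> 0" and sup: "cmod a * (SUP z\<in>unit_disc. ?g z) < 1"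
      using G_iff by auto
    obtain z0 where z0: "cmod z0 \<le> 1" "\<forall>z. cmod z \<le> 1 \<longrightarrow> ?g z \<le> ?g z0"
      using g_max[OF nz] by blast
    have bdd: "bdd_above (?g ` unit_disc)"
      using z0 by (intro bdd_aboveI[of _ "?g z0"]) (auto simp: unit_disc_def)
    show "\<forall>z w. a*w = ?Q z \<longrightarrow> 1 < cmod w + (cmod z)^2"
    proof (intro allI impI)
      fix z w assume e: "a*w = ?Q z"
      show "1 < cmod w + (cmod z)^2"
      proof (cases "cmod z \<le> 1")
        case False
        then have "1 < (cmod z)^2" by (simp add: one_less_power)
        then show ?thesis by (smt (verit) norm_ge_zero)
      next
        case True
        then have Qn: "?Q z \<noteq> 0" using nz by simp
        then have an: "a \<noteq> 0" "w \<noteq> 0" using e by auto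
        show ?thesis
        proof (cases "cmod z = 1")
          case True then show ?thesis using an by simp
        next
          case False
          then have "z \<in> unit_disc" using \<open>cmod z \<le> 1\<close> unfolding unit_disc_def by simp
          then have "?g z \<le> (SUP z\<in>unit_disc. ?g z)" using bdd by (rule cSUP_upper)
          then have "cmod a * ?g z < 1" using sup
            by (meson le_less_trans mult_left_mono norm_ge_zero)
          then have "cmod a * (1 - (cmod z)^2) < cmod (?Q z)" using Qn by (simp add: field_simps)
          also have "\<dots> = cmod a * cmod w" using e by (metis norm_mult)
          finally have "1 - (cmod z)^2 < cmod w" using an by simp
          then show ?thesis by simp
        qed
      qed
    qed
  qed
next
  let ?Q = "\<lambda>z. 1 - s*z + p*z^2"
  show "(\<forall>z w. a*w = ?Q z \<longrightarrow> 1 \<le> cmod w + (cmod z)^2) \<longleftrightarrow>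
           (s,p) \<in> symm_bidisc_closed \<and> (\<forall>z\<in>unit_disc. cmod a * (1 - (cmod z)^2) / cmod (?Q z) \<le> 1)"
  proof
    assume H: "\<forall>z w. a*w = ?Q z \<longrightarrow> 1 \<le> cmod w + (cmod z)^2"
    have nz: "\<forall>z. cmod z < 1 \<longrightarrow> ?Q z \<noteq> 0"
    proof (intro allI impI)
      fix z :: complex assume "cmod z < 1"
      moreover have "(cmod z)^2 < 1" using calculation by (simp add: power_less_one_iff)
      ultimately show "?Q z \<noteq> 0" using H[rule_format, of 0 z] by auto
    qed
    have "cmod a * (1 - (cmod z)^2) / cmod (?Q z) \<le> 1" if "z \<in> unit_disc" for z
    proof (cases "a = 0")
      case True then show ?thesis by simp
    next
      case False
      have Qn: "?Q z \<noteq> 0" using nz that unfolding unit_disc_def by simp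
      have "1 \<le> cmod (?Q z / a) + (cmod z)^2" using H[rule_format, of "?Q z / a" z] False by simp
      then have "cmod a * (1 - (cmod z)^2) \<le> cmod (?Q z)" using False
        by (simp add: norm_divide field_simps)
      then show ?thesis using Qn by (simp add: field_simps)
    qed
    then show "(s,p) \<in> symm_bidisc_closed \<and> (\<forall>z\<in>unit_disc. cmod a * (1 - (cmod z)^2) / cmod (?Q z) \<le> 1)"
      using nz Gam_iff by blast
  next
    assume "(s,p) \<in> symm_bidisc_closed \<and> (\<forall>z\<in>unit_disc. cmod a * (1 - (cmod z)^2) / cmod (?Q z) \<le> 1)"
    then have nz: "\<forall>z. cmod z < 1 \<longrightarrow> ?Q z \<noteq> 0" and pw: "\<forall>z\<in>unit_disc. cmod a * (1 - (cmod z)^2) / cmod (?Q z) \<le> 1"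
      using Gam_iff by auto
    show "\<forall>z w. a*w = ?Q z \<longrightarrow> 1 \<le> cmod w + (cmod z)^2"
    proof (intro allI impI)
      fix z w assume e: "a*w = ?Q z"
      show "1 \<le> cmod w + (cmod z)^2"
      proof (cases "cmod z < 1")
        case False
        then have "1 \<le> (cmod z)^2" by (simp add: one_le_power)
        then show ?thesis by (smt (verit) norm_ge_zero)
      next
        case True
        then have Qn: "?Q z \<noteq> 0" using nz by simp
        then have an: "a \<noteq> 0" using e by auto
        have "cmod a * (1 - (cmod z)^2) / cmod (?Q z) \<le> 1" using pw True unfolding unit_disc_def by simp
        then have "cmod a * (1 - (cmod z)^2) \<le> cmod (?Q z)" using Qn by (simp add: field_simps)
        also have "\<dots> = cmod a * cmod w" using e by (metis norm_mult)
        finally have "1 - (cmod z)^2 \<le> cmod w" using an by simp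
        then show ?thesis by simp
      qed
    qed
  qed
qed

theorem proposition3p1:
  fixes A :: "complex^2^2"
  defines "s \<equiv> trace A" and "p \<equiv> det A"
  shows "(muE A < 1 \<longleftrightarrow>
            (s, p) \<in> symm_bidisc \<and>
            cmod (A $ 2 $ 1) *
              (SUP z\<in>unit_disc. (1 - (cmod z)\<^sup>2) / cmod (1 - s * z + p * z\<^sup>2)) < 1)
       \<and> (muE A \<le> 1 \<longleftrightarrow>
            (s, p) \<in> symm_bidisc_closed \<and>
            (\<forall>z\<in>unit_disc. cmod (A $ 2 $ 1) * (1 - (cmod z)\<^sup>2) / cmod (1 - s * z + p * z\<^sup>2) \<le> 1))"
  using muE_char[of A] core[of "A $ 2 $ 1" "trace A" "det A"] unfolding s_def p_def by simp


end
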